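(* Assume (RHS.1), (RHS.2), (BC.1), (BC.2), and, if (RHS.2b) holds, that condition (M.1) holds for all meshes. Then for any choice of parameters $\mathfrak h=(h,\varepsilon,\theta)$ there exists a unique $u_{\mathfrak h}\in\mathbb V_h$ solving the discrete problem.
   Context: Setting: $\Omega\subset\mathbb R^d$ ($d\ge1$) is a bounded domain with continuous boundary. For $r>0$, $\Omega^{(r)}=\{x\in\Omega:\operatorname{dist}(x,\partial\Omega)>r\}$. $\{\mathcal T_h\}_{h>0}$ is a family of meshes of closed simplices, $h=\max_T\operatorname{diam}T$, $\Omega_h$ the interior of the union of the simplices, with $\Omega^{(h)}\subset\Omega_h\subset\Omega$; $\mathcal N_h$ the set of vertices. $\mathbb V_h$: continuous piecewise linear functions on $\mathcal T_h$, hat basis $\{\hat\varphi_z\}$, Lagrange interpolant $\mathcal I_h$. Parameters $\mathfrak h=(h,\varepsilon,\theta)$, $\varepsilon\in[h,\operatorname{diam}\Omega]$, $0<\theta\le1$. $\mathcal N_h^I=\mathcal N_h\cap\Omega^{(2\varepsilon)}$, $\mathcal N_h^b=\mathcal N_h\setminus\mathcal N_h^I$. $\mathbb S_\theta$: finite symmetric subset of the unit sphere $\mathbb S$ such that each $v\in\mathbb S$ has $v_\theta\in\mathbb S_\theta$ with $|v-v_\theta|\le\theta$. For $z\in\mathcal N_h^I$: $\mathcal N_{\mathfrak h}(z)=\{z\}\cup\{z+\varepsilon v_\theta:v_\theta\in\mathbb S_\theta\}$, $-\Delta^\diamond_{\infty,\mathfrak h}w(z)=\varepsilon^{-2}\big(2w(z)-\max_{x\in\mathcal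 N_{\mathfrak h}(z)}\mathcal I_hw(x)-\min_{x\in\mathcal N_{\mathfrak h}(z)}\mathcal I_hw(x)\big)$, $\widetilde{\mathcal N}_{\mathfrak h}(z)=\{z\}\cup\{z'\in\mathcal N_h:\exists v_\theta\in\mathbb S_\theta,\ \hat\varphi_{z'}(z+\varepsilon v_\theta)>0\}$. Assumptions: (RHS.1) $f\in C(\Omega)\cap L^\infty(\Omega)$. (RHS.2) either (RHS.2a) $\sup_\Omega f<0$ or $\inf_\Omega f>0$, or (RHS.2b) $f\equiv0$. (BC.1) $g\in C(\partial\Omega)$. (BC.2) for every $\varepsilon>0$ a function $\tilde g_\varepsilon\in C(\overline\Omega)$ is given such that, if $g\in C^{0,\alpha}(\partial\Omega)$ for some $\alpha\in[0,1]$, then $\tilde g_\varepsilon\in C^{0,\alpha}(\overline\Omega)$ and $\|g-\tilde g_\varepsilon\|_{L^\infty(\partial\Omega)}\le C\varepsilon^\alpha$. (M.1) for every nonempty $S\subset\mathcal N_h^I$ there are $z\in S$, $z'\in\mathcal N_h\setminus S$ with $z'\in\widetilde{\mathcal N}_{\mathfrak h}(z)$. Discrete problem: find $u_{\mathfrak h}\in\mathbb V_h$ with $-\Delta^\diamond_{\infty,\mathfrak h}u_{\mathfrak h}(z)=f(z)$ for $z\in\mathcal N_h^I$ and $u_{\mathfrak h}(z)=\tilde g_\varepsilon(z)$ for $z\in\mathcal N_h^b$. *)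

theory Defs
  imports "HOL-Analysis.Analysis"
begin

definition continuous_boundary :: "'a::euclidean_space set \<Rightarrow> bool" where
  "continuous_boundary \<Omega> \<longleftrightarrow>
     (\<forall>x\<in>frontier \<Omega>. \<exists>r>0. \<exists>e \<gamma>. norm e = 1 \<and> continuous_on {y. y \<bullet> e = 0} \<gamma> \<and>
        \<Omega> \<inter> ball x r = {y \<in> ball x r. y \<bullet> e < \<gamma> (y - (y \<bullet> e) *\<^sub>R e)})"

definition bounded_domain_cb :: "'a::euclidean_space set \<Rightarrow> bool" where
  "bounded_domain_cb \<Omega> \<longleftrightarrow> open \<Omega> \<and> connected \<Omega> \<and> \<Omega> \<noteq> {} \<and> bounded \<Omega> \<and>
     continuous_boundary \<Omega>"

definition inner_set :: "'a::euclidean_space set \<Rightarrow> real \<Rightarrow> 'a set" where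
  "inner_set \<Omega> r = {x \<in> \<Omega>. infdist x (frontier \<Omega>) > r}"

definition vertices_of :: "'a::euclidean_space set \<Rightarrow> 'a set" where
  "vertices_of T = {v. v extreme_point_of T}"

definition mesh_nodes :: "'a::euclidean_space set set \<Rightarrow> 'a set" where
  "mesh_nodes \<T> = (\<Union>T\<in>\<T>. vertices_of T)"

definition is_mesh :: "'a::euclidean_space set \<Rightarrow> 'a set set \<Rightarrow> real \<Rightarrow> bool" where
  "is_mesh \<Omega> \<T> h \<longleftrightarrow> finite \<T> \<and> \<T> \<noteq> {} \<and>
     (\<forall>T\<in>\<T>. int DIM('a) simplex T) \<and>
     (\<forall>T\<in>\<T>. \<forall>T'\<in>\<T>. (T \<inter> T') face_of T) \<and>
     h = Max (diameter ` \<T>) \<and>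
     inner_set \<Omega> h \<subseteq> interior (\<Union>\<T>) \<and> interior (\<Union>\<T>) \<subseteq> \<Omega>"

text \<open>V_h: continuous piecewise linear functions on the mesh (extended by 0 outside
  the meshed region, so that elements are unique as HOL functions).\<close>
definition Vh :: "'a::euclidean_space set set \<Rightarrow> ('a \<Rightarrow> real) set" where
  "Vh \<T> = {u. continuous_on (\<Union>\<T>) u \<and>
             (\<forall>T\<in>\<T>. \<exists>a b. \<forall>x\<in>T. u x = a \<bullet> x + b) \<and>
             (\<forall>x. x \<notin> \<Union>\<T> \<longrightarrow> u x = 0)}"

definition hat :: "'a::euclidean_space set set \<Rightarrow> 'a \<Rightarrow> 'a \<Rightarrow> real" where
  "hat \<T> z = (THE u. u \<in> Vh \<T> \<and> (\<forall>z'\<in>mesh_nodes \<T>. u z' = (if z' = z then 1 else 0)))"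

definition interp :: "'a::euclidean_space set set \<Rightarrow> ('a \<Rightarrow> real) \<Rightarrow> 'a \<Rightarrow> real" where
  "interp \<T> w x = (\<Sum>z\<in>mesh_nodes \<T>. w z * hat \<T> z x)"

definition sphere_net :: "real \<Rightarrow> 'a::euclidean_space set \<Rightarrow> bool" where
  "sphere_net \<theta> S \<longleftrightarrow> finite S \<and> S \<subseteq> sphere 0 1 \<and> (\<forall>v\<in>S. - v \<in> S) \<and>
     (\<forall>v\<in>sphere 0 1. \<exists>v'\<in>S. norm (v - v') \<le> \<theta>)"

definition interior_nodes :: "'a::euclidean_space set \<Rightarrow> 'a set set \<Rightarrow> real \<Rightarrow> 'a set" where
  "interior_nodes \<Omega> \<T> \<epsilon> = mesh_nodes \<T> \<inter> inner_set \<Omega> (2 * \<epsilon>)"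

definition boundary_nodes :: "'a::euclidean_space set \<Rightarrow> 'a set set \<Rightarrow> real \<Rightarrow> 'a set" where
  "boundary_nodes \<Omega> \<T> \<epsilon> = mesh_nodes \<T> - interior_nodes \<Omega> \<T> \<epsilon>"

definition stencil :: "real \<Rightarrow> 'a::euclidean_space set \<Rightarrow> 'a \<Rightarrow> 'a set" where
  "stencil \<epsilon> S z = insert z ((\<lambda>v. z + \<epsilon> *\<^sub>R v) ` S)"

definition neg_inf_lap :: "'a::euclidean_space set set \<Rightarrow> real \<Rightarrow> 'a set \<Rightarrow> ('a \<Rightarrow> real) \<Rightarrow> 'a \<Rightarrow> real" where
  "neg_inf_lap \<T> \<epsilon> S w z =
     (2 * w z - Max (interp \<T> w ` stencil \<epsilon> S z) - Min (interp \<T> w ` stencil \<epsilon> S z)) / \<epsilon>\<^sup>2"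

definition ext_stencil :: "'a::euclidean_space set set \<Rightarrow> real \<Rightarrow> 'a set \<Rightarrow> 'a \<Rightarrow> 'a set" where
  "ext_stencil \<T> \<epsilon> S z =
     insert z {z' \<in> mesh_nodes \<T>. \<exists>v\<in>S. hat \<T> z' (z + \<epsilon> *\<^sub>R v) > 0}"

definition cond_M1 :: "'a::euclidean_space set \<Rightarrow> 'a set set \<Rightarrow> real \<Rightarrow> 'a set \<Rightarrow> bool" where
  "cond_M1 \<Omega> \<T> \<epsilon> S \<longleftrightarrow>
     (\<forall>A. A \<subseteq> interior_nodes \<Omega> \<T> \<epsilon> \<and> A \<noteq> {} \<longrightarrow>
        (\<exists>z\<in>A. \<exists>z'\<in>mesh_nodes \<T> - A. z' \<in> ext_stencil \<T> \<epsilon> S z))"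

definition solves_discrete :: "'a::euclidean_space set \<Rightarrow> 'a set set \<Rightarrow> real \<Rightarrow> 'a set \<Rightarrow>
    ('a \<Rightarrow> real) \<Rightarrow> ('a \<Rightarrow> real) \<Rightarrow> ('a \<Rightarrow> real) \<Rightarrow> bool" where
  "solves_discrete \<Omega> \<T> \<epsilon> S f gt u \<longleftrightarrow> u \<in> Vh \<T> \<and>
     (\<forall>z\<in>interior_nodes \<Omega> \<T> \<epsilon>. neg_inf_lap \<T> \<epsilon> S u z = f z) \<and>
     (\<forall>z\<in>boundary_nodes \<Omega> \<T> \<epsilon>. u z = gt z)"

definition holder_on :: "real \<Rightarrow> 'a::metric_space set \<Rightarrow> ('a \<Rightarrow> real) \<Rightarrow> bool" where
  "holder_on \<alpha> S u \<longleftrightarrow> continuous_on S u \<and> bounded (u ` S) \<and>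
     (\<exists>L. \<forall>x\<in>S. \<forall>y\<in>S. \<bar>u x - u y\<bar> \<le> L * dist x y powr \<alpha>)"

end

theory Submission
  imports Defs
begin

lemma lin_rep:
  fixes g :: "'a::euclidean_space \<Rightarrow> real"
  assumes "linear g" shows "g x = (\<Sum>i\<in>Basis. g i *\<^sub>R i) \<bullet> x"
proof -
  have "g x = g (\<Sum>i\<in>Basis. (x \<bullet> i) *\<^sub>R i)" by (simp add: euclidean_representation)
  also have "\<dots> = (\<Sum>i\<in>Basis. (x \<bullet> i) * g i)"
    using assms by (simp add: linear_sum linear_scale)
  also have "\<dots> = (\<Sum>i\<in>Basis. g i *\<^sub>R i) \<bullet> x"
    unfolding inner_sum_left inner_scaleR_left by (rule sum.cong[OF refl]) (metis inner_commute mult.commute)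
  finally show ?thesis .
qed

lemma affine_interp_exists:
  fixes C :: "'a::euclidean_space set" and val :: "'a \<Rightarrow> real"
  assumes "\<not> affine_dependent C"
  shows "\<exists>a b. \<forall>x\<in>C. a \<bullet> x + b = val x"
proof (cases "C = {}")
  case True then show ?thesis by auto
next
  case False
  then obtain c0 where c0: "c0 \<in> C" by auto
  let ?D = "(\<lambda>x. -c0 + x) ` (C - {c0})"
  have ind: "independent ?D"
    using affine_dependent_iff_dependent2[OF c0] assms by simp
  obtain g where g: "linear g" "\<forall>y\<in>?D. g y = val (y + c0) - val c0"
    using linear_independent_extend[OF ind, of "\<lambda>y. val (y + c0) - val c0"] by blast
  define a where "a = (\<Sum>i\<in>Basis. g i *\<^sub>R i)"
  show ?thesis
  proof (intro exI ballI)
    fix x assume x: "x \<in> C"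
    show "a \<bullet> x + (val c0 - a \<bullet> c0) = val x"
    proof (cases "x = c0")
      case True then show ?thesis by simp
    next
      case False
      then have "-c0 + x \<in> ?D" using x by blast
      then have "g (-c0 + x) = val x - val c0" using g(2) x False by auto
      moreover have "g (-c0 + x) = a \<bullet> x - a \<bullet> c0" 
        unfolding lin_rep[OF g(1), of "-c0+x"] a_def[symmetric] by (simp add: inner_diff_right)
      ultimately show ?thesis by simp
    qed
  qed
qed
lemma aff_eq_hull:
  fixes C :: "'a::euclidean_space set"
  assumes "\<forall>x\<in>C. a \<bullet> x + b = a' \<bullet> x + b'" "x \<in> convex hull C"
  shows "a \<bullet> x + b = a' \<bullet> x + b'"
proof -
  have cv: "convex {x. (a - a') \<bullet> x = b' - b}" by (rule convex_hyperplane)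
  have "C \<subseteq> {x. (a - a') \<bullet> x = b' - b}" using assms(1) by (auto simp: inner_diff_left algebra_simps)
  then have "convex hull C \<subseteq> {x. (a - a') \<bullet> x = b' - b}" using cv by (rule hull_minimal)
  then show ?thesis using assms(2) by (auto simp: inner_diff_left algebra_simps)
qed

lemma aff_nonneg_hull:
  fixes C :: "'a::euclidean_space set"
  assumes "\<forall>x\<in>C. a \<bullet> x + b \<ge> 0" "x \<in> convex hull C"
  shows "a \<bullet> x + b \<ge> 0"
proof -
  have cv: "convex {x. a \<bullet> x \<ge> - b}" by (rule convex_halfspace_ge)
  have "C \<subseteq> {x. a \<bullet> x \<ge> - b}" using assms(1) by auto
  then have "convex hull C \<subseteq> {x. a \<bullet> x \<ge> - b}" using cv by (rule hull_minimal)
  then show ?thesis using assms(2) by auto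
qed

lemma stencil_fin: "finite S \<Longrightarrow> finite (stencil \<epsilon> S z)"
  unfolding stencil_def by simp

lemma stencil_z: "z \<in> stencil \<epsilon> S z"
  unfolding stencil_def by simp

lemma stencil_v: "v \<in> S \<Longrightarrow> z + \<epsilon> *\<^sub>R v \<in> stencil \<epsilon> S z"
  unfolding stencil_def by blast

lemma maxmin_mono:
  fixes F G :: "'b \<Rightarrow> real"
  assumes "finite P" "P \<noteq> {}" "\<forall>p\<in>P. F p \<le> G p"
  shows "Max (F ` P) \<le> Max (G ` P)" "Min (F ` P) \<le> Min (G ` P)"
proof -
  have "Max (F ` P) \<in> F ` P" using assms by (intro Max_in) auto
  then obtain p1 where p1: "p1 \<in> P" "Max (F ` P) = F p1" by auto
  have "G p1 \<le> Max (G ` P)" using p1 assms by auto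
  moreover have "F p1 \<le> G p1" using p1 assms by auto
  ultimately show "Max (F ` P) \<le> Max (G ` P)" using p1(2) by linarith
  have "Min (G ` P) \<in> G ` P" using assms by (intro Min_in) auto
  then obtain q1 where q1: "q1 \<in> P" "Min (G ` P) = G q1" by auto
  have "Min (F ` P) \<le> F q1" using q1 assms by auto
  moreover have "F q1 \<le> G q1" using q1 assms by auto
  ultimately show "Min (F ` P) \<le> Min (G ` P)" using q1(2) by linarith
qed

lemma quad_pair:
  fixes z :: "'a::euclidean_space"
  assumes S: "S \<subseteq> sphere 0 1" "\<forall>v\<in>S. - v \<in> S" "S \<noteq> {}" and p1: "p1 \<in> stencil \<epsilon> S z"
  shows "\<exists>p2\<in>stencil \<epsilon> S z. p1 \<bullet> p1 + p2 \<bullet> p2 - 2 * (z \<bullet> z) \<ge> \<epsilon>\<^sup>2"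
proof -
  have sq: "(z + \<epsilon> *\<^sub>R v) \<bullet> (z + \<epsilon> *\<^sub>R v) = z \<bullet> z + 2 * \<epsilon> * (z \<bullet> v) + \<epsilon>\<^sup>2"
    if "v \<in> S" for v
  proof -
    have "v \<bullet> v = 1" using that S(1) by (auto simp: norm_eq_1)
    then show ?thesis by (simp add: inner_add_left inner_add_right inner_commute power2_eq_square algebra_simps)
  qed
  show ?thesis
  proof (cases "p1 = z")
    case True
    obtain v where v: "v \<in> S" using S(3) by auto
    have mv: "- v \<in> S" using S(2) v by auto
    show ?thesis
    proof (cases "z \<bullet> v \<ge> 0")
      case True
      show ?thesis
      proof (cases "\<epsilon> \<ge> 0")
        case True
        then show ?thesis using \<open>p1 = z\<close> sq[OF v] \<open>z \<bullet> v \<ge> 0\<close> stencil_v[OF v, of z \<epsilon>]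
          by (intro bexI[of _ "z + \<epsilon> *\<^sub>R v"]) auto
      next
        case False
        then show ?thesis using \<open>p1 = z\<close> sq[OF mv] \<open>z \<bullet> v \<ge> 0\<close> stencil_v[OF mv, of z \<epsilon>]
          by (intro bexI[of _ "z + \<epsilon> *\<^sub>R - v"]) (auto simp: mult_nonpos_nonneg)
      qed
    next
      case False
      show ?thesis
      proof (cases "\<epsilon> \<ge> 0")
        case True
        then show ?thesis using \<open>p1 = z\<close> sq[OF mv] False stencil_v[OF mv, of z \<epsilon>]
          by (intro bexI[of _ "z + \<epsilon> *\<^sub>R - v"]) (auto simp: mult_nonneg_nonpos)
      next
        case F2: False
        then show ?thesis using \<open>p1 = z\<close> sq[OF v] False stencil_v[OF v, of z \<epsilon>]
          by (intro bexI[of _ "z + \<epsilon> *\<^sub>R v"]) (auto simp: mult_nonpos_nonpos)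
      qed
    qed
  next
    case False
    then obtain v where v: "v \<in> S" "p1 = z + \<epsilon> *\<^sub>R v" using p1 unfolding stencil_def by auto
    have mv: "- v \<in> S" using S(2) v by auto
    show ?thesis using sq[OF v(1)] sq[OF mv] v stencil_v[OF mv, of z \<epsilon>]
      by (intro bexI[of _ "z + \<epsilon> *\<^sub>R - v"]) auto
  qed
qed

lemma tarski_box:
  fixes T :: "('a \<Rightarrow> real) \<Rightarrow> ('a \<Rightarrow> real)"
  assumes mono: "\<And>a b. \<forall>y\<in>N. a y \<le> b y \<Longrightarrow> \<forall>y\<in>N. T a y \<le> T b y"
    and lohi: "\<forall>y\<in>N. lo y \<le> hi y" and lo: "\<forall>y\<in>N. lo y \<le> T lo y" and hi: "\<forall>y\<in>N. T hi y \<le> hi y"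
  shows "\<exists>a. \<forall>y\<in>N. T a y = a y"
proof -
  define X where "X = {a. \<forall>y\<in>N. lo y \<le> a y \<and> a y \<le> hi y}"
  define D where "D = {a\<in>X. \<forall>y\<in>N. a y \<le> T a y}"
  define s where "s y = Sup ((\<lambda>a. a y) ` D)" for y
  have TX: "T a \<in> X" if "a \<in> X" for a
  proof -
    have "\<forall>y\<in>N. T lo y \<le> T a y" "\<forall>y\<in>N. T a y \<le> T hi y"
      using mono that unfolding X_def by auto
    then show ?thesis using lo hi unfolding X_def by fastforce
  qed
  have loD: "lo \<in> D" using lo lohi unfolding D_def X_def by auto
  have bdd: "bdd_above ((\<lambda>a. a y) ` D)" if "y \<in> N" for y
    using that unfolding bdd_above_def D_def X_def by auto
  have up: "a y \<le> s y" if "a \<in> D" "y \<in> N" for a y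
    unfolding s_def using that bdd by (intro cSup_upper) auto
  have least: "s y \<le> c" if "y \<in> N" "\<And>a. a \<in> D \<Longrightarrow> a y \<le> c" for y c
    unfolding s_def using that loD by (intro cSup_least) auto
  have sX: "s \<in> X"
    unfolding X_def using up[OF loD] least D_def X_def by fastforce
  have s1: "\<forall>y\<in>N. s y \<le> T s y"
  proof
    fix y assume y: "y \<in> N"
    show "s y \<le> T s y"
    proof (rule least[OF y])
      fix a assume a: "a \<in> D"
      have "\<forall>y\<in>N. T a y \<le> T s y" using mono up a by auto
      then show "a y \<le> T s y" using a y unfolding D_def by force
    qed
  qed
  have "T s \<in> D" using TX[OF sX] mono[OF s1] unfolding D_def by auto
  then have "\<forall>y\<in>N. T s y \<le> s y" using up by auto
  then show ?thesis using s1 by (intro exI[of _ s]) force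
qed

locale pmesh =
  fixes \<T> :: "'a::euclidean_space set set"
  assumes finT: "finite \<T>"
    and simpT: "\<And>T. T \<in> \<T> \<Longrightarrow> \<exists>n. n simplex T"
    and conf: "\<And>T T'. T \<in> \<T> \<Longrightarrow> T' \<in> \<T> \<Longrightarrow> (T \<inter> T') face_of T"
begin

abbreviation "N \<equiv> mesh_nodes \<T>"

lemma simplex_facts:
  assumes "T \<in> \<T>"
  shows "compact T" "convex T" "T = convex hull (vertices_of T)" "finite (vertices_of T)"
    "\<not> affine_dependent (vertices_of T)"
proof -
  obtain n where "n simplex T" using simpT[OF assms] by auto
  then obtain C where C: "finite C" "\<not> affine_dependent C" "T = convex hull C"
    unfolding simplex by auto
  have V: "vertices_of T = C"
    unfolding vertices_of_def C(3) using extreme_point_of_convex_hull_affine_independent[OF C(2)] by auto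
  show "compact T" "convex T" using C by (auto simp: finite_imp_compact_convex_hull)
  show "T = convex hull (vertices_of T)" "finite (vertices_of T)" "\<not> affine_dependent (vertices_of T)"
    using C V by auto
qed

lemma vert_sub: "T \<in> \<T> \<Longrightarrow> vertices_of T \<subseteq> T"
  unfolding vertices_of_def by (auto simp: extreme_point_of_def)

lemma vert_N: "T \<in> \<T> \<Longrightarrow> vertices_of T \<subseteq> N"
  unfolding mesh_nodes_def by auto

lemma finN: "finite N"
  unfolding mesh_nodes_def using finT simplex_facts(4) by auto

lemma N_sub: "N \<subseteq> \<Union>\<T>"
  unfolding mesh_nodes_def using vert_sub by blast

lemma VhD:
  assumes "u \<in> Vh \<T>"
  shows "continuous_on (\<Union>\<T>) u" "\<And>T. T \<in> \<T> \<Longrightarrow> \<exists>a b. \<forall>x\<in>T. u x = a \<bullet> x + b"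
    "\<And>x. x \<notin> \<Union>\<T> \<Longrightarrow> u x = 0"
  using assms by (simp_all add: Vh_def)

lemma Vh_unique:
  assumes "u \<in> Vh \<T>" "w \<in> Vh \<T>" "\<forall>y\<in>N. u y = w y"
  shows "u = w"
proof
  fix x
  show "u x = w x"
  proof (cases "x \<in> \<Union>\<T>")
    case False then show ?thesis using assms by (auto simp: Vh_def)
  next
    case True
    then obtain T where T: "T \<in> \<T>" "x \<in> T" by auto
    obtain a b where ab: "\<forall>x\<in>T. u x = a \<bullet> x + b" using VhD(2)[OF assms(1) T(1)] by blast
    obtain a' b' where ab': "\<forall>x\<in>T. w x = a' \<bullet> x + b'" using VhD(2)[OF assms(2) T(1)] by blast
    have "\<forall>y\<in>vertices_of T. a \<bullet> y + b = a' \<bullet> y + b'"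
      using ab ab' assms(3) vert_N[OF T(1)] vert_sub[OF T(1)] by (metis subsetD)
    then have "a \<bullet> x + b = a' \<bullet> x + b'"
      using aff_eq_hull simplex_facts(3)[OF T(1)] T(2) by metis
    then show ?thesis using ab ab' T by auto
  qed
qed

lemma Vh_exists: "\<exists>u\<in>Vh \<T>. \<forall>y\<in>N. u y = val y"
proof -
  have "\<forall>T\<in>\<T>. \<exists>a b. \<forall>x\<in>vertices_of T. a \<bullet> x + b = val x"
    using affine_interp_exists simplex_facts(5) by blast
  then obtain A B where AB: "\<And>T x. T \<in> \<T> \<Longrightarrow> x \<in> vertices_of T \<Longrightarrow> A T \<bullet> x + B T = val x"
    by metis
  define sel where "sel x = (SOME T. T \<in> \<T> \<and> x \<in> T)" for x
  define u where "u x = (if x \<in> \<Union>\<T> then A (sel x) \<bullet> x + B (sel x) else 0)" for x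
  have key: "u x = A T \<bullet> x + B T" if T: "T \<in> \<T>" "x \<in> T" for T x
  proof -
    have s: "sel x \<in> \<T> \<and> x \<in> sel x" unfolding sel_def by (rule someI[of _ T]) (use T in auto)
    define T' where "T' = sel x"
    have T': "T' \<in> \<T>" "x \<in> T'" using s T'_def by auto
    define F where "F = T \<inter> T'"
    have F1: "F face_of T" using conf[OF T(1) T'(1)] F_def by simp
    have F2: "F face_of T'" using conf[OF T'(1) T(1)] F_def by (simp add: Int_commute)
    have "compact F" "convex F" unfolding F_def
      using simplex_facts(1,2)[OF T(1)] simplex_facts(1,2)[OF T'(1)]
      by (auto simp: compact_Int convex_Int)
    then have Fh: "F = convex hull {v. v extreme_point_of F}" by (rule Krein_Milman_Minkowski)
    have "\<forall>v\<in>{v. v extreme_point_of F}. A T \<bullet> v + B T = A T' \<bullet> v + B T'"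
    proof
      fix v assume "v \<in> {v. v extreme_point_of F}"
      then have "v \<in> vertices_of T" "v \<in> vertices_of T'"
        using extreme_point_of_face[OF F1] extreme_point_of_face[OF F2] by (auto simp: vertices_of_def)
      then show "A T \<bullet> v + B T = A T' \<bullet> v + B T'" using AB T(1) T'(1) by metis
    qed
    moreover have "x \<in> convex hull {v. v extreme_point_of F}" using Fh T T' F_def by auto
    ultimately have "A T \<bullet> x + B T = A T' \<bullet> x + B T'" by (rule aff_eq_hull)
    then show ?thesis unfolding u_def T'_def using T by auto
  qed
  have "u \<in> Vh \<T>"
    unfolding Vh_def
  proof (intro CollectI conjI allI impI ballI)
    have "continuous_on (\<Union>T\<in>\<T>. id T) u"
    proof (rule continuous_on_closed_Union[OF finT])
      fix T assume T: "T \<in> \<T>"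
      show "closed (id T)" using simplex_facts(1)[OF T] by (simp add: compact_imp_closed)
      have "continuous_on T (\<lambda>x. A T \<bullet> x + B T)" by (intro continuous_intros)
      then show "continuous_on (id T) u" using key[OF T] by (simp add: continuous_on_eq)
    qed
    then show "continuous_on (\<Union>\<T>) u" by simp
    show "\<exists>a b. \<forall>x\<in>T. u x = a \<bullet> x + b" if "T \<in> \<T>" for T using key[OF that] by blast
    show "u x = 0" if "x \<notin> \<Union>\<T>" for x using that by (simp add: u_def)
  qed
  moreover have "\<forall>y\<in>N. u y = val y"
  proof
    fix y assume "y \<in> N"
    then obtain T where T: "T \<in> \<T>" "y \<in> vertices_of T" unfolding mesh_nodes_def by auto
    then show "u y = val y" using key[OF T(1)] vert_sub[OF T(1)] AB by auto
  qed
  ultimately show ?thesis by blast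
qed

lemma hat_props:
  assumes "z \<in> N"
  shows "hat \<T> z \<in> Vh \<T>" "\<And>z'. z' \<in> N \<Longrightarrow> hat \<T> z z' = (if z' = z then 1 else 0)"
proof -
  obtain u0 where u0: "u0 \<in> Vh \<T>" "\<forall>y\<in>N. u0 y = (if y = z then 1 else 0)"
    using Vh_exists[of "\<lambda>z'. if z' = z then 1 else 0"] by blast
  have ex: "\<exists>!u. u \<in> Vh \<T> \<and> (\<forall>z'\<in>N. u z' = (if z' = z then 1 else 0))"
  proof (rule ex1I[of _ u0])
    show "u0 \<in> Vh \<T> \<and> (\<forall>z'\<in>N. u0 z' = (if z' = z then 1 else 0))" using u0 by blast
    fix x assume "x \<in> Vh \<T> \<and> (\<forall>z'\<in>N. x z' = (if z' = z then 1 else 0))"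
    then show "x = u0" using u0 by (intro Vh_unique) auto
  qed
  have "hat \<T> z \<in> Vh \<T> \<and> (\<forall>z'\<in>N. hat \<T> z z' = (if z' = z then 1 else 0))"
    unfolding hat_def by (rule theI'[OF ex])
  then show "hat \<T> z \<in> Vh \<T>" "\<And>z'. z' \<in> N \<Longrightarrow> hat \<T> z z' = (if z' = z then 1 else 0)" by auto
qed

lemma Vh_zero: "(\<lambda>x. 0) \<in> Vh \<T>"
proof -
  have "\<forall>x\<in>T. (0::real) = (0::'a) \<bullet> x + 0" for T by simp
  then show ?thesis unfolding Vh_def by (intro CollectI conjI continuous_on_const) blast+
qed

lemma Vh_comb:
  assumes "u \<in> Vh \<T>" "w \<in> Vh \<T>"
  shows "(\<lambda>x. c * u x + w x) \<in> Vh \<T>"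
  unfolding Vh_def
proof (intro CollectI conjI allI impI ballI)
  have "continuous_on (\<Union>\<T>) u" "continuous_on (\<Union>\<T>) w" using VhD(1) assms by blast+
  then show "continuous_on (\<Union>\<T>) (\<lambda>x. c * u x + w x)"
    by (intro continuous_intros)
  show "\<exists>a b. \<forall>x\<in>T. c * u x + w x = a \<bullet> x + b" if TT: "T \<in> \<T>" for T
  proof -
    obtain a b where ab: "\<forall>x\<in>T. u x = a \<bullet> x + b" using VhD(2)[OF assms(1) TT] by blast
    obtain a' b' where ab': "\<forall>x\<in>T. w x = a' \<bullet> x + b'" using VhD(2)[OF assms(2) TT] by blast
    show ?thesis
      by (rule exI[of _ "c *\<^sub>R a + a'"], rule exI[of _ "c * b + b'"])
        (use ab ab' in \<open>simp add: inner_add_left distrib_left\<close>)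
  qed
  show "c * u x + w x = 0" if "x \<notin> \<Union>\<T>" for x
  proof -
    have "u x = 0" "w x = 0" using VhD(3) assms that by blast+
    then show ?thesis by simp
  qed
qed

lemma Vh_sum:
  assumes "finite Z" "\<And>z. z \<in> Z \<Longrightarrow> F z \<in> Vh \<T>"
  shows "(\<lambda>x. \<Sum>z\<in>Z. c z * F z x) \<in> Vh \<T>"
  using assms
proof (induction Z rule: finite_induct)
  case empty then show ?case using Vh_zero by simp
next
  case (insert z Z)
  then show ?case using Vh_comb[of "F z" "\<lambda>x. \<Sum>z\<in>Z. c z * F z x" "c z"] by simp
qed

lemma interp_Vh_mem: "interp \<T> a \<in> Vh \<T>"
proof -
  have "interp \<T> a = (\<lambda>x. \<Sum>z\<in>N. a z * hat \<T> z x)" by (simp add: interp_def[abs_def])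
  then show ?thesis using Vh_sum[OF finN, of "hat \<T>" a] hat_props(1) by simp
qed

lemma interp_node: assumes "y \<in> N" shows "interp \<T> a y = a y"
proof -
  have "interp \<T> a y = (\<Sum>z\<in>N. if z = y then a z else 0)"
    unfolding interp_def by (rule sum.cong) (auto simp: hat_props(2)[OF _ assms])
  also have "\<dots> = a y" using assms finN by simp
  finally show ?thesis .
qed

lemma interp_Vh: assumes "u \<in> Vh \<T>" shows "interp \<T> u = u"
  by (rule Vh_unique[OF interp_Vh_mem assms]) (simp add: interp_node)

lemma Vh_nonneg:
  assumes "u \<in> Vh \<T>" "\<forall>y\<in>N. u y \<ge> 0"
  shows "u x \<ge> 0"
proof (cases "x \<in> \<Union>\<T>")
  case False then show ?thesis using assms by (auto simp: Vh_def)
next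
  case True
  then obtain T where T: "T \<in> \<T>" "x \<in> T" by auto
  obtain a b where ab: "\<forall>x\<in>T. u x = a \<bullet> x + b" using VhD(2)[OF assms(1) T(1)] by blast
  have "\<forall>y\<in>vertices_of T. a \<bullet> y + b \<ge> 0"
    using ab assms(2) vert_N[OF T(1)] vert_sub[OF T(1)] by (metis subsetD)
  then have "a \<bullet> x + b \<ge> 0"
    using aff_nonneg_hull simplex_facts(3)[OF T(1)] T(2) by metis
  then show ?thesis using ab T by auto
qed

lemma hat_nonneg: "z \<in> N \<Longrightarrow> hat \<T> z x \<ge> 0"
  by (rule Vh_nonneg[OF hat_props(1)]) (auto simp: hat_props(2))

lemma ind_lin_Vh: "(\<lambda>x. if x \<in> \<Union>\<T> then e \<bullet> x + c else 0) \<in> Vh \<T>"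
  unfolding Vh_def
proof (intro CollectI conjI allI impI ballI)
  have "continuous_on (\<Union>\<T>) (\<lambda>x. e \<bullet> x + c)" by (intro continuous_intros)
  then show "continuous_on (\<Union>\<T>) (\<lambda>x. if x \<in> \<Union>\<T> then e \<bullet> x + c else 0)"
    by (rule continuous_on_eq) auto
  show "\<exists>a b. \<forall>x\<in>T. (if x \<in> \<Union>\<T> then e \<bullet> x + c else 0) = a \<bullet> x + b" if "T \<in> \<T>" for T
    using that by (intro exI[of _ e] exI[of _ c]) auto
qed auto

lemma sum_hat_lin:
  "(\<Sum>y\<in>N. hat \<T> y p * (e \<bullet> y + c)) = (if p \<in> \<Union>\<T> then e \<bullet> p + c else 0)"
proof -
  let ?u = "\<lambda>x. if x \<in> \<Union>\<T> then e \<bullet> x + c else 0"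
  have "interp \<T> ?u p = ?u p" using interp_Vh[OF ind_lin_Vh] by simp
  moreover have "interp \<T> ?u p = (\<Sum>y\<in>N. hat \<T> y p * (e \<bullet> y + c))"
    unfolding interp_def by (rule sum.cong) (use N_sub in auto)
  ultimately show ?thesis by simp
qed

lemma sum_hat: "(\<Sum>y\<in>N. hat \<T> y p) = (if p \<in> \<Union>\<T> then 1 else 0)"
  using sum_hat_lin[of p 0 1] by simp

lemma sum_hat_inner: "(\<Sum>y\<in>N. hat \<T> y p * (e \<bullet> y)) = (if p \<in> \<Union>\<T> then e \<bullet> p else 0)"
  using sum_hat_lin[of p e 0] by simp

lemma jensen:
  assumes "p \<in> \<Union>\<T>"
  shows "(\<Sum>y\<in>N. hat \<T> y p * (y \<bullet> y)) \<ge> p \<bullet> p"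
proof -
  have "0 \<le> (\<Sum>y\<in>N. hat \<T> y p * ((y - p) \<bullet> (y - p)))"
    by (intro sum_nonneg mult_nonneg_nonneg hat_nonneg) auto
  also have "\<dots> = (\<Sum>y\<in>N. hat \<T> y p * (y \<bullet> y) - 2 * (hat \<T> y p * (p \<bullet> y)) + (p \<bullet> p) * hat \<T> y p)"
    by (rule sum.cong) (auto simp: inner_diff_left inner_diff_right inner_commute algebra_simps)
  also have "\<dots> = (\<Sum>y\<in>N. hat \<T> y p * (y \<bullet> y)) - 2 * (\<Sum>y\<in>N. hat \<T> y p * (p \<bullet> y)) + (p \<bullet> p) * (\<Sum>y\<in>N. hat \<T> y p)"
    by (simp add: sum.distrib sum_subtractf sum_distrib_left)
  also have "\<dots> = (\<Sum>y\<in>N. hat \<T> y p * (y \<bullet> y)) - p \<bullet> p"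
    using assms by (simp add: sum_hat sum_hat_inner)
  finally show ?thesis by simp
qed

lemma interp_out: "p \<notin> \<Union>\<T> \<Longrightarrow> interp \<T> a p = 0"
  using interp_Vh_mem unfolding Vh_def by auto

lemma interp_mono: "(\<forall>y\<in>N. a y \<le> b y) \<Longrightarrow> interp \<T> a p \<le> interp \<T> b p"
  unfolding interp_def by (intro sum_mono mult_right_mono hat_nonneg) auto

lemma interp_diff: "interp \<T> a p - interp \<T> b p = (\<Sum>y\<in>N. hat \<T> y p * (a y - b y))"
  unfolding interp_def by (simp add: sum_subtractf[symmetric] algebra_simps)

lemma interp_alt: "interp \<T> a p = (\<Sum>y\<in>N. hat \<T> y p * a y)"
  unfolding interp_def by (simp add: mult.commute)


lemma interp_eq_on_N: "\<forall>y\<in>N. a y = b y \<Longrightarrow> interp \<T> a p = interp \<T> b p"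
  unfolding interp_def by (rule sum.cong) auto

lemma existence:
  fixes f g :: "'a \<Rightarrow> real"
  assumes eps: "\<epsilon> > 0" and S: "finite S" "S \<subseteq> sphere 0 1" "\<forall>v\<in>S. - v \<in> S" "S \<noteq> {}"
    and I: "I \<subseteq> N"
  shows "\<exists>u\<in>Vh \<T>. (\<forall>z\<in>I. 2 * u z - Max (interp \<T> u ` stencil \<epsilon> S z) - Min (interp \<T> u ` stencil \<epsilon> S z) = \<epsilon>\<^sup>2 * f z)
          \<and> (\<forall>z\<in>N - I. u z = g z)"
proof -
  let ?P = "stencil \<epsilon> S"
  let ?L = "interp \<T>"
  define C where "C = (\<Sum>z\<in>I. \<bar>f z\<bar>)"
  define Pall where "Pall = (\<Union>z\<in>I. ?P z)"
  define K where "K = C * (\<Sum>p\<in>Pall. p \<bullet> p) + C * (\<Sum>y\<in>N. y \<bullet> y) + (\<Sum>y\<in>N. \<bar>g y\<bar>)"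
  define hi where "hi x = K - C * (x \<bullet> x)" for x :: 'a
  define lo where "lo x = - K + C * (x \<bullet> x)" for x :: 'a
  define T where "T a z = (if z \<in> I then (Max (?L a ` ?P z) + Min (?L a ` ?P z)) / 2 + \<epsilon>\<^sup>2 * f z / 2
      else if z \<in> N then g z else 0)" for a z
  have finI: "finite I" using I finN finite_subset by blast
  have finP: "finite (?P z)" "?P z \<noteq> {}" for z using stencil_fin[OF S(1)] stencil_z by (auto, blast)
  have finPall: "finite Pall" unfolding Pall_def using finI finP by auto
  have C0: "C \<ge> 0" unfolding C_def by (simp add: sum_nonneg)
  have fC: "\<bar>f z\<bar> \<le> C" if "z \<in> I" for z
    unfolding C_def using finI that by (intro member_le_sum) auto
  have s1: "0 \<le> (\<Sum>p\<in>Pall. p \<bullet> p)" "0 \<le> (\<Sum>y\<in>N. y \<bullet> y)" "0 \<le> (\<Sum>y\<in>N. \<bar>g y\<bar>)"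
    by (auto intro: sum_nonneg)
  have pP: "p \<bullet> p \<le> (\<Sum>p\<in>Pall. p \<bullet> p)" if "p \<in> Pall" for p
    using finPall that by (intro member_le_sum) auto
  have yN: "y \<bullet> y \<le> (\<Sum>y\<in>N. y \<bullet> y)" if "y \<in> N" for y
    using finN that by (intro member_le_sum) auto
  have gN: "\<bar>g y\<bar> \<le> (\<Sum>y\<in>N. \<bar>g y\<bar>)" if "y \<in> N" for y
    using finN that by (intro member_le_sum) auto
  have KP: "C * (p \<bullet> p) \<le> K" if "p \<in> Pall" for p
  proof -
    have "C * (p \<bullet> p) \<le> C * (\<Sum>p\<in>Pall. p \<bullet> p)" using pP[OF that] C0 by (rule mult_left_mono)
    moreover have "0 \<le> C * (\<Sum>y\<in>N. y \<bullet> y)" using C0 s1 by simp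
    ultimately show ?thesis unfolding K_def using s1 by linarith
  qed
  have KN: "C * (y \<bullet> y) + \<bar>g y\<bar> \<le> K" if "y \<in> N" for y
  proof -
    have "C * (y \<bullet> y) \<le> C * (\<Sum>y\<in>N. y \<bullet> y)" using yN[OF that] C0 by (rule mult_left_mono)
    moreover have "0 \<le> C * (\<Sum>p\<in>Pall. p \<bullet> p)" using C0 s1 by simp
    ultimately show ?thesis unfolding K_def using gN[OF that] by linarith
  qed
  have Lhi_eq: "?L hi p = K * (\<Sum>y\<in>N. hat \<T> y p) - C * (\<Sum>y\<in>N. hat \<T> y p * (y \<bullet> y))" for p
    unfolding interp_alt hi_def by (simp add: right_diff_distrib sum_subtractf sum_distrib_left algebra_simps)
  have Llo_eq: "?L lo p = - K * (\<Sum>y\<in>N. hat \<T> y p) + C * (\<Sum>y\<in>N. hat \<T> y p * (y \<bullet> y))" for p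
    unfolding interp_alt lo_def by (simp add: distrib_left sum.distrib sum_distrib_left sum_subtractf sum_negf algebra_simps)
  have Lhi: "?L hi p \<le> hi p" if "p \<in> Pall" for p
  proof (cases "p \<in> \<Union>\<T>")
    case True
    have "C * (p \<bullet> p) \<le> C * (\<Sum>y\<in>N. hat \<T> y p * (y \<bullet> y))" using jensen[OF True] C0 by (rule mult_left_mono)
    then show ?thesis using True unfolding Lhi_eq hi_def sum_hat by simp
  next
    case False
    then show ?thesis using KP[OF that] interp_out[OF False] unfolding hi_def by simp
  qed
  have Llo: "?L lo p \<ge> lo p" if "p \<in> Pall" for p
  proof (cases "p \<in> \<Union>\<T>")
    case True
    have "C * (p \<bullet> p) \<le> C * (\<Sum>y\<in>N. hat \<T> y p * (y \<bullet> y))" using jensen[OF True] C0 by (rule mult_left_mono)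
    then show ?thesis using True unfolding Llo_eq lo_def sum_hat by simp
  next
    case False
    then show ?thesis using KP[OF that] interp_out[OF False] unfolding lo_def by simp
  qed
  have mono: "\<forall>y\<in>N. T a y \<le> T b y" if ab: "\<forall>y\<in>N. a y \<le> b y" for a b
  proof
    fix y assume "y \<in> N"
    have "\<forall>p\<in>?P y. ?L a p \<le> ?L b p" using interp_mono[OF ab] by auto
    from maxmin_mono[OF finP(1) finP(2) this] show "T a y \<le> T b y" unfolding T_def by auto
  qed
  have lohi: "\<forall>y\<in>N. lo y \<le> hi y" using KN C0 unfolding lo_def hi_def by force
  have hiT: "\<forall>y\<in>N. T hi y \<le> hi y"
  proof
    fix z assume z: "z \<in> N"
    show "T hi z \<le> hi z"
    proof (cases "z \<in> I")
      case False
      then show ?thesis using KN[OF z] z unfolding T_def hi_def by auto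
    next
      case True
      have PP: "?P z \<subseteq> Pall" using True unfolding Pall_def by auto
      have "Max (?L hi ` ?P z) \<in> ?L hi ` ?P z" using finP by (intro Max_in) auto
      then obtain p1 where p1: "p1 \<in> ?P z" "Max (?L hi ` ?P z) = ?L hi p1" by auto
      obtain p2 where p2: "p2 \<in> ?P z" "p1 \<bullet> p1 + p2 \<bullet> p2 - 2 * (z \<bullet> z) \<ge> \<epsilon>\<^sup>2"
        using quad_pair[OF S(2-4) p1(1)] by auto
      have "Min (?L hi ` ?P z) \<le> ?L hi p2" using finP p2 by auto
      moreover have "?L hi p1 \<le> K - C * (p1 \<bullet> p1)" "?L hi p2 \<le> K - C * (p2 \<bullet> p2)"
        using Lhi PP p1 p2 unfolding hi_def by auto
      moreover have "C * \<epsilon>\<^sup>2 \<le> C * (p1 \<bullet> p1 + p2 \<bullet> p2 - 2 * (z \<bullet> z))" using p2(2) C0 by (rule mult_left_mono)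
      then have "C * \<epsilon>\<^sup>2 \<le> C * (p1 \<bullet> p1) + C * (p2 \<bullet> p2) - 2 * (C * (z \<bullet> z))" by (simp add: algebra_simps)
      moreover have "\<epsilon>\<^sup>2 * f z \<le> \<epsilon>\<^sup>2 * C" using fC[OF True] by (intro mult_left_mono) auto
      then have "\<epsilon>\<^sup>2 * f z \<le> C * \<epsilon>\<^sup>2" by (simp add: mult.commute)
      moreover have "T hi z = (Max (?L hi ` ?P z) + Min (?L hi ` ?P z)) / 2 + \<epsilon>\<^sup>2 * f z / 2"
        using True unfolding T_def by simp
      moreover have "hi z = K - C * (z \<bullet> z)" unfolding hi_def by simp
      ultimately show ?thesis using p1(2) by (simp add: field_simps)
    qed
  qed
  have loT: "\<forall>y\<in>N. lo y \<le> T lo y"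
  proof
    fix z assume z: "z \<in> N"
    show "lo z \<le> T lo z"
    proof (cases "z \<in> I")
      case False
      then show ?thesis using KN[OF z] z unfolding T_def lo_def by auto
    next
      case True
      have PP: "?P z \<subseteq> Pall" using True unfolding Pall_def by auto
      have "Min (?L lo ` ?P z) \<in> ?L lo ` ?P z" using finP by (intro Min_in) auto
      then obtain p1 where p1: "p1 \<in> ?P z" "Min (?L lo ` ?P z) = ?L lo p1" by auto
      obtain p2 where p2: "p2 \<in> ?P z" "p1 \<bullet> p1 + p2 \<bullet> p2 - 2 * (z \<bullet> z) \<ge> \<epsilon>\<^sup>2"
        using quad_pair[OF S(2-4) p1(1)] by auto
      have "Max (?L lo ` ?P z) \<ge> ?L lo p2" using finP p2 by auto
      moreover have "?L lo p1 \<ge> - K + C * (p1 \<bullet> p1)" "?L lo p2 \<ge> - K + C * (p2 \<bullet> p2)"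
        using Llo PP p1 p2 unfolding lo_def by auto
      moreover have "C * \<epsilon>\<^sup>2 \<le> C * (p1 \<bullet> p1 + p2 \<bullet> p2 - 2 * (z \<bullet> z))" using p2(2) C0 by (rule mult_left_mono)
      then have "C * \<epsilon>\<^sup>2 \<le> C * (p1 \<bullet> p1) + C * (p2 \<bullet> p2) - 2 * (C * (z \<bullet> z))" by (simp add: algebra_simps)
      moreover have "\<epsilon>\<^sup>2 * (- f z) \<le> \<epsilon>\<^sup>2 * C" using fC[OF True] by (intro mult_left_mono) auto
      then have "- (C * \<epsilon>\<^sup>2) \<le> \<epsilon>\<^sup>2 * f z" by (simp add: mult.commute)
      moreover have "T lo z = (Max (?L lo ` ?P z) + Min (?L lo ` ?P z)) / 2 + \<epsilon>\<^sup>2 * f z / 2"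
        using True unfolding T_def by simp
      moreover have "lo z = - K + C * (z \<bullet> z)" unfolding lo_def by simp
      ultimately show ?thesis using p1(2) by (simp add: field_simps)
    qed
  qed
  obtain a where a: "\<forall>y\<in>N. T a y = a y" using tarski_box[OF mono lohi loT hiT] by blast
  obtain u where u: "u \<in> Vh \<T>" "\<forall>y\<in>N. u y = a y" using Vh_exists by blast
  have Lu: "?L u p = ?L a p" for p using interp_eq_on_N u(2) by blast
  show ?thesis
  proof (intro bexI[OF _ u(1)] conjI ballI)
    fix z assume z: "z \<in> I"
    then have "u z = T a z" using a u I by auto
    then show "2 * u z - Max (?L u ` ?P z) - Min (?L u ` ?P z) = \<epsilon>\<^sup>2 * f z"
      using z unfolding Lu T_def by (simp add: field_simps)
  next
    fix z assume z: "z \<in> N - I"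
    then show "u z = g z" using a u unfolding T_def by force
  qed
qed


lemma uniq_half:
  fixes f :: "'a \<Rightarrow> real"
  assumes eps: "\<epsilon> > 0" and S: "finite S" and I: "I \<subseteq> N"
    and u: "u \<in> Vh \<T>" and w: "w \<in> Vh \<T>"
    and Eu: "\<forall>z\<in>I. 2 * u z - Max (interp \<T> u ` stencil \<epsilon> S z) - Min (interp \<T> u ` stencil \<epsilon> S z) = \<epsilon>\<^sup>2 * f z"
    and Ew: "\<forall>z\<in>I. 2 * w z - Max (interp \<T> w ` stencil \<epsilon> S z) - Min (interp \<T> w ` stencil \<epsilon> S z) = \<epsilon>\<^sup>2 * f z"
    and B: "\<forall>z\<in>N - I. u z = w z"
    and hyp: "(\<forall>z\<in>I. f z > 0) \<or> (\<forall>z\<in>I. f z < 0) \<or>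
       ((\<forall>z\<in>I. f z = 0) \<and> (\<forall>A. A \<subseteq> I \<and> A \<noteq> {} \<longrightarrow>
          (\<exists>z\<in>A. \<exists>z'\<in>N - A. z' = z \<or> (\<exists>v\<in>S. hat \<T> z' (z + \<epsilon> *\<^sub>R v) > 0))))"
  shows "\<forall>y\<in>N. u y \<le> w y"
proof (rule ccontr)
  let ?P = "stencil \<epsilon> S"
  let ?Lu = "interp \<T> u" and ?Lw = "interp \<T> w"
  assume "\<not> (\<forall>y\<in>N. u y \<le> w y)"
  then obtain y0 where y0: "y0 \<in> N" "u y0 > w y0" by force
  define d where "d y = u y - w y" for y
  define M where "M = Max (d ` N)"
  have Mge: "d y \<le> M" if "y \<in> N" for y unfolding M_def using finN that by auto
  have M0: "M > 0" using Mge[OF y0(1)] y0(2) unfolding d_def by simp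
  define A where "A = {y\<in>N. d y = M}"
  have "M \<in> d ` N" unfolding M_def using finN y0 by (intro Max_in) auto
  then have Ane: "A \<noteq> {}" unfolding A_def by auto
  have AI: "A \<subseteq> I" using B M0 unfolding A_def d_def by force
  have finA: "finite A" unfolding A_def using finN by simp
  have finP: "finite (?P z)" "?P z \<noteq> {}" for z using stencil_fin[OF S] stencil_z by (auto, blast)
  have sh: "(\<Sum>y\<in>N. hat \<T> y p) \<le> 1" for p by (simp add: sum_hat)
  have shn: "(\<Sum>y\<in>N. hat \<T> y p) \<ge> 0" for p by (simp add: sum_hat)
  have Dle: "?Lu p - ?Lw p \<le> M" for p
  proof -
    have "?Lu p - ?Lw p = (\<Sum>y\<in>N. hat \<T> y p * d y)" unfolding interp_diff d_def ..
    also have "\<dots> \<le> (\<Sum>y\<in>N. hat \<T> y p * M)" using Mge by (intro sum_mono mult_left_mono hat_nonneg) auto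
    also have "\<dots> = M * (\<Sum>y\<in>N. hat \<T> y p)" by (simp add: sum_distrib_left mult.commute)
    also have "\<dots> \<le> M" using sh[of p] M0 by (simp add: mult_left_le)
    finally show ?thesis .
  qed
  have supp: "(\<Sum>y\<in>N. hat \<T> y p) = 1 \<and> (\<forall>y\<in>N. hat \<T> y p \<noteq> 0 \<longrightarrow> y \<in> A)"
    if ge: "?Lu p - ?Lw p \<ge> M" for p
  proof -
    have eq: "(\<Sum>y\<in>N. hat \<T> y p * (M - d y)) + M * (1 - (\<Sum>y\<in>N. hat \<T> y p)) = M - (?Lu p - ?Lw p)"
      unfolding interp_diff d_def by (simp add: sum_subtractf sum.distrib right_diff_distrib sum_distrib_left algebra_simps)
    have t1: "0 \<le> (\<Sum>y\<in>N. hat \<T> y p * (M - d y))" using Mge by (intro sum_nonneg mult_nonneg_nonneg hat_nonneg) auto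
    have t2: "0 \<le> M * (1 - (\<Sum>y\<in>N. hat \<T> y p))" using M0 sh[of p] by simp
    have z1: "(\<Sum>y\<in>N. hat \<T> y p * (M - d y)) = 0" and z2: "M * (1 - (\<Sum>y\<in>N. hat \<T> y p)) = 0"
      using eq t1 t2 ge by linarith+
    have "(\<Sum>y\<in>N. hat \<T> y p) = 1" using z2 M0 by simp
    moreover have "\<forall>y\<in>N. hat \<T> y p * (M - d y) = 0"
      using z1 sum_nonneg_eq_0_iff[OF finN, of "\<lambda>y. hat \<T> y p * (M - d y)"] Mge hat_nonneg by auto
    then have "\<forall>y\<in>N. hat \<T> y p \<noteq> 0 \<longrightarrow> y \<in> A" unfolding A_def by auto
    ultimately show ?thesis by blast
  qed
  have comb_le: "(\<Sum>y\<in>N. hat \<T> y p * c y) \<le> m"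
    if "(\<Sum>y\<in>N. hat \<T> y p) = 1" "\<forall>y\<in>N. hat \<T> y p \<noteq> 0 \<longrightarrow> y \<in> A" "\<forall>y\<in>A. c y \<le> m" for p c m
  proof -
    have "(\<Sum>y\<in>N. hat \<T> y p * c y) \<le> (\<Sum>y\<in>N. hat \<T> y p * m)"
    proof (rule sum_mono)
      fix y assume y: "y \<in> N"
      show "hat \<T> y p * c y \<le> hat \<T> y p * m"
        using that y hat_nonneg[OF y] by (cases "hat \<T> y p = 0") (auto intro: mult_left_mono)
    qed
    also have "\<dots> = m" using that(1) by (simp add: sum_distrib_right[symmetric])
    finally show ?thesis .
  qed
  have comb_ge: "(\<Sum>y\<in>N. hat \<T> y p * c y) \<ge> m"
    if "(\<Sum>y\<in>N. hat \<T> y p) = 1" "\<forall>y\<in>N. hat \<T> y p \<noteq> 0 \<longrightarrow> y \<in> A" "\<forall>y\<in>A. c y \<ge> m" for p c m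
  proof -
    have "(\<Sum>y\<in>N. hat \<T> y p * c y) \<ge> (\<Sum>y\<in>N. hat \<T> y p * m)"
    proof (rule sum_mono)
      fix y assume y: "y \<in> N"
      show "hat \<T> y p * c y \<ge> hat \<T> y p * m"
        using that y hat_nonneg[OF y] by (cases "hat \<T> y p = 0") (auto intro: mult_left_mono)
    qed
    moreover have "(\<Sum>y\<in>N. hat \<T> y p * m) = m" using that(1) by (simp add: sum_distrib_right[symmetric])
    ultimately show ?thesis by simp
  qed
  have key: "Max (?Lu ` ?P z) = Max (?Lw ` ?P z) + M \<and> Min (?Lu ` ?P z) = Min (?Lw ` ?P z) + M
     \<and> (\<exists>p1\<in>?P z. ?Lu p1 = Max (?Lu ` ?P z) \<and> ?Lu p1 - ?Lw p1 \<ge> M)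
     \<and> (\<exists>q1\<in>?P z. ?Lw q1 = Min (?Lw ` ?P z) \<and> ?Lu q1 - ?Lw q1 \<ge> M)" if z: "z \<in> A" for z
  proof -
    have zI: "z \<in> I" using z AI by auto
    have "Max (?Lu ` ?P z) \<in> ?Lu ` ?P z" using finP by (intro Max_in) auto
    then obtain p1 where p1: "p1 \<in> ?P z" "?Lu p1 = Max (?Lu ` ?P z)" by auto
    have "Min (?Lw ` ?P z) \<in> ?Lw ` ?P z" using finP by (intro Min_in) auto
    then obtain q1 where q1: "q1 \<in> ?P z" "?Lw q1 = Min (?Lw ` ?P z)" by auto
    have a1: "?Lw p1 \<le> Max (?Lw ` ?P z)" using p1 finP by auto
    have a2: "Min (?Lu ` ?P z) \<le> ?Lu q1" using q1 finP by auto
    have a3: "?Lu p1 - ?Lw p1 \<le> M" "?Lu q1 - ?Lw q1 \<le> M" using Dle by auto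
    have uz: "u z = w z + M" using z unfolding A_def d_def by auto
    have e: "2 * u z - Max (?Lu ` ?P z) - Min (?Lu ` ?P z) = 2 * w z - Max (?Lw ` ?P z) - Min (?Lw ` ?P z)"
      using Eu Ew zI by auto
    have m1: "Max (?Lu ` ?P z) = Max (?Lw ` ?P z) + M" "Min (?Lu ` ?P z) = Min (?Lw ` ?P z) + M"
      using a1 a2 a3 p1(2) q1(2) e uz by linarith+
    have "?Lu p1 - ?Lw p1 \<ge> M" using m1 p1(2) a1 by linarith
    moreover have "?Lu q1 - ?Lw q1 \<ge> M" using m1 q1(2) a2 by linarith
    ultimately show ?thesis using m1 p1 q1 by blast
  qed
  have Lnode: "?Lu z = u z" "?Lw z = w z" if "z \<in> A" for z using that interp_node unfolding A_def by auto
  have zP: "z \<in> ?P z" for z by (rule stencil_z)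
  have MaxZ: "F z \<le> Max (F ` ?P z)" for F :: "'a \<Rightarrow> real" and z
    using Max_ge[OF finite_imageI[OF finP(1)] imageI[OF zP]] .
  have MinZ: "Min (F ` ?P z) \<le> F z" for F :: "'a \<Rightarrow> real" and z
    using Min_le[OF finite_imageI[OF finP(1)] imageI[OF zP]] .
  from hyp show False
  proof (elim disjE conjE)
    assume fpos: "\<forall>z\<in>I. f z > 0"
    have "Min (w ` A) \<in> w ` A" using finA Ane by (intro Min_in) auto
    then obtain z where z: "z \<in> A" "w z = Min (w ` A)" by auto
    have wmin: "\<forall>y\<in>A. w y \<ge> w z" using z finA by auto
    obtain q1 where q1: "q1 \<in> ?P z" "?Lw q1 = Min (?Lw ` ?P z)" "?Lu q1 - ?Lw q1 \<ge> M" using key[OF z(1)] by blast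
    have sq: "(\<Sum>y\<in>N. hat \<T> y q1) = 1" "\<forall>y\<in>N. hat \<T> y q1 \<noteq> 0 \<longrightarrow> y \<in> A" using supp[OF q1(3)] by auto
    have "?Lw q1 \<ge> w z" unfolding interp_alt using comb_ge[OF sq wmin] .
    moreover have "Max (?Lw ` ?P z) \<ge> w z" using Lnode[OF z(1)] MaxZ[of ?Lw z] by simp
    moreover have "\<epsilon>\<^sup>2 * f z > 0" using fpos z AI eps by auto
    ultimately show False using Ew z AI q1(2) by force
  next
    assume fneg: "\<forall>z\<in>I. f z < 0"
    have "Max (u ` A) \<in> u ` A" using finA Ane by (intro Max_in) auto
    then obtain z where z: "z \<in> A" "u z = Max (u ` A)" by auto
    have umax: "\<forall>y\<in>A. u y \<le> u z" using z finA by auto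
    obtain p1 where p1: "p1 \<in> ?P z" "?Lu p1 = Max (?Lu ` ?P z)" "?Lu p1 - ?Lw p1 \<ge> M" using key[OF z(1)] by blast
    have sp: "(\<Sum>y\<in>N. hat \<T> y p1) = 1" "\<forall>y\<in>N. hat \<T> y p1 \<noteq> 0 \<longrightarrow> y \<in> A" using supp[OF p1(3)] by auto
    have "?Lu p1 \<le> u z" unfolding interp_alt using comb_le[OF sp umax] .
    moreover have "Min (?Lu ` ?P z) \<le> u z" using Lnode[OF z(1)] MinZ[of ?Lu z] by simp
    moreover have "\<epsilon>\<^sup>2 * f z < 0" using fneg z AI eps by (auto simp: mult_pos_neg)
    ultimately show False using Eu z AI p1(2) by force
  next
    assume f0: "\<forall>z\<in>I. f z = 0"
      and M1: "\<forall>A. A \<subseteq> I \<and> A \<noteq> {} \<longrightarrow> (\<exists>z\<in>A. \<exists>z'\<in>N - A. z' = z \<or> (\<exists>v\<in>S. hat \<T> z' (z + \<epsilon> *\<^sub>R v) > 0))"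
    define m where "m = Max (u ` A)"
    define A' where "A' = {y\<in>A. u y = m}"
    have "m \<in> u ` A" unfolding m_def using finA Ane by (intro Max_in) auto
    then have A'ne: "A' \<noteq> {}" unfolding A'_def by auto
    have umax: "\<forall>y\<in>A. u y \<le> m" unfolding m_def using finA by auto
    have A'I: "A' \<subseteq> I" using AI unfolding A'_def by auto
    have closed: "z' \<in> A'" if z: "z \<in> A'" and v: "v \<in> S" and z': "z' \<in> N" "hat \<T> z' (z + \<epsilon> *\<^sub>R v) > 0"
      for z z' v
    proof -
      have zA: "z \<in> A" and uz: "u z = m" using z unfolding A'_def by auto
      have zI: "z \<in> I" using zA AI by auto
      obtain p1 where p1: "p1 \<in> ?P z" "?Lu p1 = Max (?Lu ` ?P z)" "?Lu p1 - ?Lw p1 \<ge> M" using key[OF zA] by blast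
      have sp: "(\<Sum>y\<in>N. hat \<T> y p1) = 1" "\<forall>y\<in>N. hat \<T> y p1 \<noteq> 0 \<longrightarrow> y \<in> A" using supp[OF p1(3)] by auto
      have "?Lu p1 \<le> m" unfolding interp_alt using comb_le[OF sp umax] .
      moreover have "Max (?Lu ` ?P z) \<ge> u z" using Lnode[OF zA] MaxZ[of ?Lu z] by simp
      ultimately have mx: "Max (?Lu ` ?P z) = m" using p1(2) uz by linarith
      have mn: "Min (?Lu ` ?P z) = m" using Eu zI f0 mx uz by auto
      define p where "p = z + \<epsilon> *\<^sub>R v"
      have pP: "p \<in> ?P z" unfolding p_def by (rule stencil_v[OF v])
      have "?Lu p \<le> Max (?Lu ` ?P z)" "?Lu p \<ge> Min (?Lu ` ?P z)" using pP finP by auto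
      then have Lup: "?Lu p = m" using mx mn by linarith
      have uzw: "u z - w z = M" using zA unfolding A_def d_def by auto
      have k: "Max (?Lu ` ?P z) = Max (?Lw ` ?P z) + M" "Min (?Lu ` ?P z) = Min (?Lw ` ?P z) + M"
        using key[OF zA] by auto
      have "?Lw p \<le> Max (?Lw ` ?P z)" "?Lw p \<ge> Min (?Lw ` ?P z)" using pP finP by auto
      then have "?Lw p = m - M" using k mx mn by linarith
      then have sp2: "(\<Sum>y\<in>N. hat \<T> y p) = 1" "\<forall>y\<in>N. hat \<T> y p \<noteq> 0 \<longrightarrow> y \<in> A"
        using supp[of p] Lup by auto
      have z'A: "z' \<in> A" using sp2(2) z' unfolding p_def by auto
      have "(\<Sum>y\<in>N. hat \<T> y p * (m - u y)) = m * (\<Sum>y\<in>N. hat \<T> y p) - ?Lu p"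
        unfolding interp_alt by (simp add: right_diff_distrib sum_subtractf sum_distrib_left algebra_simps)
      then have s0: "(\<Sum>y\<in>N. hat \<T> y p * (m - u y)) = 0" using sp2(1) Lup by simp
      have nn: "\<forall>y\<in>N. 0 \<le> hat \<T> y p * (m - u y)"
      proof
        fix y assume y: "y \<in> N"
        show "0 \<le> hat \<T> y p * (m - u y)"
          using sp2(2) y umax hat_nonneg[OF y] by (cases "hat \<T> y p = 0") auto
      qed
      have "hat \<T> z' p * (m - u z') = 0"
        using s0 sum_nonneg_eq_0_iff[OF finN, of "\<lambda>y. hat \<T> y p * (m - u y)"] nn z'(1) by auto
      then have "u z' = m" using z'(2) unfolding p_def by auto
      then show ?thesis using z'A unfolding A'_def by auto
    qed
    have "\<exists>z\<in>A'. \<exists>z'\<in>N - A'. z' = z \<or> (\<exists>v\<in>S. hat \<T> z' (z + \<epsilon> *\<^sub>R v) > 0)"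
      using M1[rule_format, OF conjI[OF A'I A'ne]] .
    then obtain z z' where zz: "z \<in> A'" "z' \<in> N - A'" "z' = z \<or> (\<exists>v\<in>S. hat \<T> z' (z + \<epsilon> *\<^sub>R v) > 0)"
      by blast
    then show False using closed by blast
  qed
qed

end

lemma nil_eq:
  assumes "\<epsilon> > 0"
  shows "neg_inf_lap \<T> \<epsilon> S w z = c \<longleftrightarrow>
     2 * w z - Max (interp \<T> w ` stencil \<epsilon> S z) - Min (interp \<T> w ` stencil \<epsilon> S z) = \<epsilon>\<^sup>2 * c"
  using assms unfolding neg_inf_lap_def by (auto simp: field_simps)

theorem lemma3p5:
  fixes \<Omega> :: "'a::euclidean_space set"
    and H :: "real set"
    and Tf :: "real \<Rightarrow> 'a set set"
    and Sf :: "real \<Rightarrow> 'a set"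
    and f g :: "'a \<Rightarrow> real"
    and gt :: "real \<Rightarrow> 'a \<Rightarrow> real"
  assumes dom: "bounded_domain_cb \<Omega>"
    and meshes: "H \<subseteq> {0<..}" "\<forall>h\<in>H. is_mesh \<Omega> (Tf h) h"
    and nets: "\<forall>\<theta>\<in>{0<..1}. sphere_net \<theta> (Sf \<theta>)"
    and RHS1: "continuous_on \<Omega> f" "bounded (f ` \<Omega>)"
    and RHS2: "(\<exists>c<0. \<forall>x\<in>\<Omega>. f x \<le> c) \<or> (\<exists>c>0. \<forall>x\<in>\<Omega>. f x \<ge> c) \<or> (\<forall>x\<in>\<Omega>. f x = 0)"
    and BC1: "continuous_on (frontier \<Omega>) g"
    and BC2a: "\<forall>\<epsilon>>0. continuous_on (closure \<Omega>) (gt \<epsilon>)"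
    and BC2b: "\<forall>\<alpha>\<in>{0..1}. holder_on \<alpha> (frontier \<Omega>) g \<longrightarrow>
                 (\<exists>C. \<forall>\<epsilon>>0. holder_on \<alpha> (closure \<Omega>) (gt \<epsilon>) \<and>
                        (\<forall>x\<in>frontier \<Omega>. \<bar>g x - gt \<epsilon> x\<bar> \<le> C * \<epsilon> powr \<alpha>))"
    and M1: "(\<forall>x\<in>\<Omega>. f x = 0) \<longrightarrow>
               (\<forall>h\<in>H. \<forall>\<epsilon>\<in>{h..diameter \<Omega>}. \<forall>\<theta>\<in>{0<..1}. cond_M1 \<Omega> (Tf h) \<epsilon> (Sf \<theta>))"
  shows "\<forall>h\<in>H. \<forall>\<epsilon>\<in>{h..diameter \<Omega>}. \<forall>\<theta>\<in>{0<..1}.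
           \<exists>!u. solves_discrete \<Omega> (Tf h) \<epsilon> (Sf \<theta>) f (gt \<epsilon>) u"
proof (intro ballI)
  fix h \<epsilon> \<theta> assume h: "h \<in> H" and e: "\<epsilon> \<in> {h..diameter \<Omega>}" and th: "\<theta> \<in> {0<..1::real}"
  define \<T> where "\<T> = Tf h"
  define S where "S = Sf \<theta>"
  have mesh: "is_mesh \<Omega> \<T> h" using meshes(2) h unfolding \<T>_def by auto
  interpret pmesh \<T>
  proof
    show "finite \<T>" using mesh unfolding is_mesh_def by auto
    show "\<exists>n. n simplex T" if "T \<in> \<T>" for T using mesh that unfolding is_mesh_def by auto
    show "T \<inter> T' face_of T" if "T \<in> \<T>" "T' \<in> \<T>" for T T' using mesh that unfolding is_mesh_def by auto
  qed
  have eps: "\<epsilon> > 0" using h e meshes(1) by auto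
  have net: "sphere_net \<theta> S" using nets th unfolding S_def by auto
  have Sfin: "finite S" and Ssph: "S \<subseteq> sphere 0 1" and Ssym: "\<forall>v\<in>S. - v \<in> S"
    using net unfolding sphere_net_def by auto
  obtain b :: 'a where b: "b \<in> Basis" using nonempty_Basis by blast
  have "b \<in> sphere 0 1" using b by simp
  then obtain v' where "v' \<in> S" using net th unfolding sphere_net_def by blast
  then have Sne: "S \<noteq> {}" by auto
  define I where "I = interior_nodes \<Omega> \<T> \<epsilon>"
  have IN: "I \<subseteq> N" unfolding I_def interior_nodes_def by auto
  have IO: "I \<subseteq> \<Omega>" unfolding I_def interior_nodes_def inner_set_def by auto
  have bn: "boundary_nodes \<Omega> \<T> \<epsilon> = N - I" unfolding boundary_nodes_def I_def ..
  have sol_iff: "solves_discrete \<Omega> \<T> \<epsilon> S f (gt \<epsilon>) u \<longleftrightarrow> u \<in> Vh \<T> \<and>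
      (\<forall>z\<in>I. 2 * u z - Max (interp \<T> u ` stencil \<epsilon> S z) - Min (interp \<T> u ` stencil \<epsilon> S z) = \<epsilon>\<^sup>2 * f z)
      \<and> (\<forall>z\<in>N - I. u z = gt \<epsilon> z)" for u
    unfolding solves_discrete_def bn I_def[symmetric] by (simp add: nil_eq[OF eps])
  obtain u where u: "u \<in> Vh \<T>"
    "\<forall>z\<in>I. 2 * u z - Max (interp \<T> u ` stencil \<epsilon> S z) - Min (interp \<T> u ` stencil \<epsilon> S z) = \<epsilon>\<^sup>2 * f z"
    "\<forall>z\<in>N - I. u z = gt \<epsilon> z"
    using existence[OF eps Sfin Ssph Ssym Sne IN, of f "gt \<epsilon>"] by blast
  have hyp: "(\<forall>z\<in>I. f z > 0) \<or> (\<forall>z\<in>I. f z < 0) \<or>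
       ((\<forall>z\<in>I. f z = 0) \<and> (\<forall>A. A \<subseteq> I \<and> A \<noteq> {} \<longrightarrow>
          (\<exists>z\<in>A. \<exists>z'\<in>N - A. z' = z \<or> (\<exists>v\<in>S. hat \<T> z' (z + \<epsilon> *\<^sub>R v) > 0))))"
  proof -
    consider (neg) c where "c < 0" "\<forall>x\<in>\<Omega>. f x \<le> c" | (pos) c where "c > 0" "\<forall>x\<in>\<Omega>. f x \<ge> c"
      | (zero) "\<forall>x\<in>\<Omega>. f x = 0" using RHS2 by blast
    then show ?thesis
    proof cases
      case neg
      have "\<forall>z\<in>I. f z < 0" using neg IO by (meson order_le_less_trans subsetD)
      then show ?thesis by blast
    next
      case pos
      have "\<forall>z\<in>I. f z > 0" using pos IO by (meson order_less_le_trans subsetD)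
      then show ?thesis by blast
    next
      case zero
      have "cond_M1 \<Omega> \<T> \<epsilon> S" using M1 zero h e th unfolding \<T>_def S_def by blast
      have "\<forall>A. A \<subseteq> I \<and> A \<noteq> {} \<longrightarrow>
          (\<exists>z\<in>A. \<exists>z'\<in>N - A. z' = z \<or> (\<exists>v\<in>S. hat \<T> z' (z + \<epsilon> *\<^sub>R v) > 0))"
      proof (intro allI impI)
        fix A assume A: "A \<subseteq> I \<and> A \<noteq> {}"
        then obtain z z' where zz: "z \<in> A" "z' \<in> N - A" "z' \<in> ext_stencil \<T> \<epsilon> S z"
          using \<open>cond_M1 \<Omega> \<T> \<epsilon> S\<close> unfolding cond_M1_def I_def by blast
        then have "z' = z \<or> (\<exists>v\<in>S. hat \<T> z' (z + \<epsilon> *\<^sub>R v) > 0)"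
          unfolding ext_stencil_def by auto
        then show "\<exists>z\<in>A. \<exists>z'\<in>N - A. z' = z \<or> (\<exists>v\<in>S. hat \<T> z' (z + \<epsilon> *\<^sub>R v) > 0)"
          using zz by blast
      qed
      moreover have "\<forall>z\<in>I. f z = 0" using zero IO by blast
      ultimately show ?thesis by blast
    qed
  qed
  show "\<exists>!u. solves_discrete \<Omega> (Tf h) \<epsilon> (Sf \<theta>) f (gt \<epsilon>) u"
    unfolding \<T>_def[symmetric] S_def[symmetric]
  proof (rule ex1I[of _ u])
    show "solves_discrete \<Omega> \<T> \<epsilon> S f (gt \<epsilon>) u" using sol_iff u by blast
  next
    fix w assume "solves_discrete \<Omega> \<T> \<epsilon> S f (gt \<epsilon>) w"
    then have w: "w \<in> Vh \<T>"
      "\<forall>z\<in>I. 2 * w z - Max (interp \<T> w ` stencil \<epsilon> S z) - Min (interp \<T> w ` stencil \<epsilon> S z) = \<epsilon>\<^sup>2 * f z"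
      "\<forall>z\<in>N - I. w z = gt \<epsilon> z" using sol_iff by blast+
    have B1: "\<forall>z\<in>N - I. w z = u z" and B2: "\<forall>z\<in>N - I. u z = w z" using u(3) w(3) by auto
    have "\<forall>y\<in>N. w y \<le> u y" by (rule uniq_half[OF eps Sfin IN w(1) u(1) w(2) u(2) B1 hyp])
    moreover have "\<forall>y\<in>N. u y \<le> w y" by (rule uniq_half[OF eps Sfin IN u(1) w(1) u(2) w(2) B2 hyp])
    ultimately show "w = u" using Vh_unique[OF w(1) u(1)] by force
  qed
qed

end
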